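(* Let $\mathbb{D}$ be a domain and $\mathbb{D}_1, \ldots, \mathbb{D}_k \subseteq \mathbb{D}$ arbitrary subsets. Let $\mathcal{M} := \{M_i(D \cap \mathbb{D}_i)\}_{1\le i\le k}$ be mechanisms, where $M_i$ also receives the outputs of $M_1,\ldots,M_{i-1}$ and is $f_i$-differentially private (in its data argument, for every value of the previous outputs). Then the composition of $\mathcal{M}$ (the mechanism outputting all the outputs of $M_1,\dots,M_k$ run in sequence) is $f_\gamma$-differentially private, where $$f_\gamma := \mathrm{lce}\left\{ \bigotimes_{i\in I} f_i \;:\; I \subseteq \{1,\ldots,k\},\ \bigcap_{i \in I} \mathbb{D}_i \neq \emptyset \right\}.$$
   Context: An attribute is a finite set; a domain is $\mathbb{D} = A_1 \times \cdots \times A_m$; data sets are elements of $\mathbb{N}^{|\mathbb{D}|}$ (multisets of rows); $D\cap\mathbb{D}'$ denotes the rows of $D$ in $\mathbb{D}'$; neighboring data sets differ in a single row. For distributions $P,P'$, the trade-off function is $T(P,P')(\alpha) := \inf\{\beta_\phi : \alpha_\phi \le \alpha\}$ over measurable rejection rules $0\le\phi\le1$, with $\alpha_\phi = \mathbb{E}_P[\phi]$ and $\beta_\phi = 1-\mathbb{E}_{P'}[\phi]$. A mechanism $M$ is $f$-differentially private if $T(M(D),M(D'))\ge f$ for all neighboring $D,D'$. If $f = T(P_1,P_2)$ and $g = T(P_3,P_4)$, the tensor product is $f\otimes g := T(P_1\times P_3, P_2 \times P_4)$ (well defined and associative, so $n$-fold products make sense). The lower convex envelope of a family $F$ of trade-off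 functions is $\mathrm{lce}\, F (x) := \sup\{ f(x) : f \text{ convex}, f \le \min F\}$. *)

theory Defs
  imports "HOL-Probability.Probability" "HOL-Library.Multiset"
begin

text \<open>Data sets are multisets of rows; rows range over a finite type (the domain).\<close>

definition restrict_ds :: "'r multiset \<Rightarrow> 'r set \<Rightarrow> 'r multiset" where
  "restrict_ds D S = filter_mset (\<lambda>x. x \<in> S) D"

definition neighboring :: "'r multiset \<Rightarrow> 'r multiset \<Rightarrow> bool" where
  "neighboring D D' \<longleftrightarrow> (\<exists>x. D' = D + {#x#}) \<or> (\<exists>x. D = D' + {#x#})"

definition tradeoff :: "'a measure \<Rightarrow> 'a measure \<Rightarrow> real \<Rightarrow> real" where
  "tradeoff P Q \<alpha> = Inf {1 - (\<integral>x. \<phi> x \<partial>Q) | \<phi>.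
      \<phi> \<in> borel_measurable P \<and> (\<forall>x\<in>space P. 0 \<le> \<phi> x \<and> \<phi> x \<le> 1) \<and>
      (\<integral>x. \<phi> x \<partial>P) \<le> \<alpha>}"

definition tradeoff_ge :: "(real \<Rightarrow> real) \<Rightarrow> (real \<Rightarrow> real) \<Rightarrow> bool" where
  "tradeoff_ge f g \<longleftrightarrow> (\<forall>\<alpha>\<in>{0..1}. g \<alpha> \<le> f \<alpha>)"

definition f_DP :: "('r multiset \<Rightarrow> 'a measure) \<Rightarrow> (real \<Rightarrow> real) \<Rightarrow> bool" where
  "f_DP M f \<longleftrightarrow> (\<forall>D D'. neighboring D D' \<longrightarrow> tradeoff_ge (tradeoff (M D) (M D')) f)"

text \<open>Tensor product of the trade-off functions T(P i, Q i), i in I: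
  T(product of P i, product of Q i).\<close>
definition tensor_tradeoff :: "nat set \<Rightarrow> (nat \<Rightarrow> 'p measure) \<Rightarrow> (nat \<Rightarrow> 'p measure) \<Rightarrow> real \<Rightarrow> real" where
  "tensor_tradeoff I P Q = tradeoff (PiM I P) (PiM I Q)"

definition lce :: "(real \<Rightarrow> real) set \<Rightarrow> real \<Rightarrow> real" where
  "lce F x = Sup {g x | g. convex_on {0..1} g \<and> (\<forall>h\<in>F. \<forall>y\<in>{0..1}. g y \<le> h y)}"

text \<open>K i h E is the output distribution of the i-th mechanism given previous outputs h
  (an element of the product of S 0, ..., S (i-1)) and data E; the i-th mechanism is
  fed D restricted to Ds i.\<close>
primrec compose ::
  "(nat \<Rightarrow> (nat \<Rightarrow> 'o) \<Rightarrow> 'r multiset \<Rightarrow> 'o measure) \<Rightarrow> (nat \<Rightarrow> 'o measure) \<Rightarrow>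
   (nat \<Rightarrow> 'r set) \<Rightarrow> nat \<Rightarrow> 'r multiset \<Rightarrow> (nat \<Rightarrow> 'o) measure" where
  "compose K S Ds 0 D = return (PiM {} S) (\<lambda>_. undefined)"
| "compose K S Ds (Suc i) D = bind (compose K S Ds i D)
      (\<lambda>h. distr (K i h (restrict_ds D (Ds i))) (PiM {..<Suc i} S) (\<lambda>y. h(i := y)))"

end

theory Submission
  imports Defs
begin


definition is_test :: "'a measure \<Rightarrow> ('a \<Rightarrow> real) \<Rightarrow> bool" where
  "is_test M \<phi> \<longleftrightarrow> \<phi> \<in> borel_measurable M \<and> (\<forall>x\<in>space M. 0 \<le> \<phi> x \<and> \<phi> x \<le> 1)"

lemma is_test_cong_sets: "sets M = sets N \<Longrightarrow> is_test M \<phi> = is_test N \<phi>"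
  unfolding is_test_def using sets_eq_imp_space_eq[of M N] measurable_cong_sets[of M N borel borel] by auto

lemma test_integrable: "prob_space M \<Longrightarrow> is_test M \<phi> \<Longrightarrow> integrable M \<phi>"
  unfolding is_test_def
  by (intro finite_measure.integrable_const_bound[where B=1]) (auto simp: prob_space.finite_measure)

lemma test_integral_bounds:
  assumes "prob_space M" "is_test M \<phi>"
  shows "0 \<le> (\<integral>x. \<phi> x \<partial>M)" "(\<integral>x. \<phi> x \<partial>M) \<le> 1"
proof -
  interpret prob_space M by fact
  show "0 \<le> (\<integral>x. \<phi> x \<partial>M)" using assms(2) unfolding is_test_def by (auto intro!: integral_nonneg)
  have "(\<integral>x. \<phi> x \<partial>M) \<le> (\<integral>x. 1 \<partial>M)"
    using assms(2) test_integrable[OF assms] unfolding is_test_def by (intro integral_mono) auto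
  then show "(\<integral>x. \<phi> x \<partial>M) \<le> 1" by (simp add: prob_space)
qed

lemma tradeoff_alt: "tradeoff P Q \<alpha> = Inf {1 - (\<integral>x. \<phi> x \<partial>Q) | \<phi>. is_test P \<phi> \<and> (\<integral>x. \<phi> x \<partial>P) \<le> \<alpha>}"
  unfolding tradeoff_def is_test_def by simp

lemma tradeoff_le:
  assumes "prob_space Q" "sets Q = sets P" "is_test P \<phi>" "(\<integral>x. \<phi> x \<partial>P) \<le> \<alpha>"
  shows "tradeoff P Q \<alpha> \<le> 1 - (\<integral>x. \<phi> x \<partial>Q)"
  unfolding tradeoff_alt
proof (rule cInf_lower)
  show "1 - (\<integral>x. \<phi> x \<partial>Q) \<in> {1 - (\<integral>x. \<phi> x \<partial>Q) | \<phi>. is_test P \<phi> \<and> (\<integral>x. \<phi> x \<partial>P) \<le> \<alpha>}"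
    using assms by auto
  show "bdd_below {1 - (\<integral>x. \<phi> x \<partial>Q) | \<phi>. is_test P \<phi> \<and> (\<integral>x. \<phi> x \<partial>P) \<le> \<alpha>}"
    unfolding bdd_below_def
    using test_integral_bounds(2)[OF assms(1)] is_test_cong_sets[OF assms(2)]
    by (intro exI[of _ 0]) force
qed

lemma tradeoff_ge_I:
  assumes "prob_space P" "0 \<le> \<alpha>"
    and "\<And>\<phi>. is_test P \<phi> \<Longrightarrow> (\<integral>x. \<phi> x \<partial>P) \<le> \<alpha> \<Longrightarrow> c \<le> 1 - (\<integral>x. \<phi> x \<partial>Q)"
  shows "c \<le> tradeoff P Q \<alpha>"
  unfolding tradeoff_alt
proof (rule cInf_greatest)
  have "is_test P (\<lambda>_. 0)" unfolding is_test_def by auto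
  then show "{1 - (\<integral>x. \<phi> x \<partial>Q) | \<phi>. is_test P \<phi> \<and> (\<integral>x. \<phi> x \<partial>P) \<le> \<alpha>} \<noteq> {}"
    using assms(2) by auto
qed (use assms(3) in auto)

lemma tradeoff_mono:
  assumes "prob_space P" "prob_space Q" "sets Q = sets P" "0 \<le> a" "a \<le> r"
  shows "tradeoff P Q r \<le> tradeoff P Q a"
  using assms by (intro tradeoff_ge_I tradeoff_le) auto

lemma tradeoff_approx:
  assumes "prob_space P" "0 \<le> a" "e > 0"
  shows "\<exists>\<phi>. is_test P \<phi> \<and> (\<integral>x. \<phi> x \<partial>P) \<le> a \<and> 1 - (\<integral>x. \<phi> x \<partial>Q) < tradeoff P Q a + e"
proof -
  let ?S = "{1 - (\<integral>x. \<phi> x \<partial>Q) | \<phi>. is_test P \<phi> \<and> (\<integral>x. \<phi> x \<partial>P) \<le> a}"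
  have "is_test P (\<lambda>_. 0)" unfolding is_test_def by auto
  then have ne: "?S \<noteq> {}" using assms(2) by auto
  have "Inf ?S < tradeoff P Q a + e" using assms(3) unfolding tradeoff_alt by simp
  from cInf_lessD[OF ne this] show ?thesis by auto
qed



lemma grid:
  fixes c a :: real
  assumes c: "c > 1" and a: "0 < a" "a \<le> 1"
  shows "a \<le> (1/c)^(nat \<lfloor>log c (1/a)\<rfloor>)" "(1/c)^(nat \<lfloor>log c (1/a)\<rfloor>) \<le> c*a"
proof -
  define L where "L = log c (1/a)"
  define m where "m = nat \<lfloor>L\<rfloor>"
  have L0: "0 \<le> L" unfolding L_def using c a by simp
  have m1: "real m \<le> L" unfolding m_def using L0 by linarith
  have m2: "L < real m + 1" unfolding m_def using L0 by linarith
  have pL: "c powr L = 1/a" unfolding L_def using c a by simp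
  have "c ^ m = c powr (real m)" using c by (simp add: powr_realpow)
  also have "\<dots> \<le> c powr L" using m1 c by (intro powr_mono) auto
  finally have u: "c ^ m \<le> 1/a" using pL by simp
  have "1/a < c powr (real m + 1)" using pL m2 c by (metis powr_less_mono)
  also have "\<dots> = c * c^m" using c by (simp add: powr_realpow[symmetric] powr_add)
  finally have v: "1/a < c * c^m" .
  have cm: "0 < c^m" using c by simp
  show "a \<le> (1/c)^m"
    using u cm a by (simp add: power_one_over field_simps)
  show "(1/c)^m \<le> c*a"
    using v cm a c by (simp add: power_one_over field_simps)
qed



lemma key:
  assumes X: "prob_space X" and Y: "prob_space Y" and XY: "sets Y = sets X"
    and P: "prob_space P" and Q: "prob_space Q" and PQ: "sets Q = sets P"
    and am: "a \<in> borel_measurable X" and ab: "\<And>h. h \<in> space X \<Longrightarrow> 0 \<le> a h \<and> a h \<le> 1"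
    and bm: "b \<in> borel_measurable X" and bb: "\<And>h. h \<in> space X \<Longrightarrow> 0 \<le> b h \<and> b h \<le> 1"
    and tb: "\<And>h. h \<in> space X \<Longrightarrow> tradeoff P Q (a h) \<le> b h"
    and e: "\<epsilon> > 0"
  shows "\<exists>\<psi>. is_test (X \<Otimes>\<^sub>M P) \<psi> \<and> (\<integral>x. \<psi> x \<partial>(X \<Otimes>\<^sub>M P)) \<le> (\<integral>h. a h \<partial>X) \<and>
     1 - (\<integral>x. \<psi> x \<partial>(Y \<Otimes>\<^sub>M Q)) \<le> (\<integral>h. b h \<partial>Y) + \<epsilon>"
proof -
  interpret X: prob_space X by fact
  interpret Y: prob_space Y by fact
  interpret P: prob_space P by fact
  interpret Q: prob_space Q by fact
  interpret XP: pair_sigma_finite X P by unfold_locales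
  interpret YQ: pair_sigma_finite Y Q by unfold_locales
  define c where "c = 1 + \<epsilon>/2"
  have c1: "c > 1" using e by (simp add: c_def)
  define lev where "lev m = (if m = 0 then 0 else (1/c)^(m - 1))" for m :: nat
  have lev0: "0 \<le> lev m" for m using c1 by (simp add: lev_def)
  have "\<forall>m. \<exists>ch. is_test P ch \<and> (\<integral>x. ch x \<partial>P) \<le> lev m \<and> 1 - (\<integral>x. ch x \<partial>Q) < tradeoff P Q (lev m) + \<epsilon>/2"
    using tradeoff_approx[OF P lev0] e by simp
  then obtain ch where ch: "\<And>m. is_test P (ch m)" "\<And>m. (\<integral>x. ch m x \<partial>P) \<le> lev m"
     "\<And>m. 1 - (\<integral>x. ch m x \<partial>Q) < tradeoff P Q (lev m) + \<epsilon>/2"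
    by metis
  define idx where "idx t = (if t \<le> 0 then 0 else Suc (nat \<lfloor>log c (1/t)\<rfloor>))" for t :: real
  have idx_m[measurable]: "idx \<in> measurable borel (count_space UNIV)"
    unfolding idx_def by measurable
  have lev_idx: "t \<le> lev (idx t) \<and> lev (idx t) \<le> c * t" if "0 \<le> t" "t \<le> 1" for t
    using grid[OF c1, of t] that c1 by (cases "t = 0") (auto simp: idx_def lev_def)
  define \<psi> where "\<psi> p = ch (idx (a (fst p))) (snd p) / c" for p
  have chm[measurable]: "ch m \<in> borel_measurable P" for m using ch(1) unfolding is_test_def by auto
  have \<psi>m: "\<psi> \<in> borel_measurable (X \<Otimes>\<^sub>M P)"
    unfolding \<psi>_def
  proof (rule measurable_compose_countable'[where I=UNIV and f="\<lambda>i p. ch i (snd p) / c"])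
    show "(\<lambda>p. idx (a (fst p))) \<in> X \<Otimes>\<^sub>M P \<rightarrow>\<^sub>M count_space UNIV"
      using am by measurable
  qed auto
  have chb: "0 \<le> ch m z \<and> ch m z \<le> 1" if "z \<in> space P" for m z
    using ch(1) that unfolding is_test_def by auto
  have test: "is_test (X \<Otimes>\<^sub>M P) \<psi>"
    unfolding is_test_def using \<psi>m chb c1
    by (auto simp: \<psi>_def space_pair_measure divide_le_eq intro: order_trans[of _ 1 c])
  have \<psi>int: "integrable (X \<Otimes>\<^sub>M P) \<psi>"
    by (rule test_integrable[OF _ test]) (simp add: prob_space_pair X P)
  show ?thesis
  proof (intro exI conjI)
    show "is_test (X \<Otimes>\<^sub>M P) \<psi>" by fact
    have "(\<integral>x. \<psi> x \<partial>(X \<Otimes>\<^sub>M P)) = (\<integral>h. (\<integral>z. \<psi> (h, z) \<partial>P) \<partial>X)"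
      using XP.integral_fst'[OF \<psi>int] by simp
    also have "\<dots> \<le> (\<integral>h. a h \<partial>X)"
    proof (rule integral_mono)
      show "integrable X (\<lambda>h. \<integral>z. \<psi> (h, z) \<partial>P)" using XP.integrable_fst'[OF \<psi>int] .
      show "integrable X a" using ab am
        by (intro X.integrable_const_bound[where B=1]) auto
      fix h assume h: "h \<in> space X"
      have "(\<integral>z. \<psi> (h, z) \<partial>P) = (\<integral>z. ch (idx (a h)) z \<partial>P) / c"
        by (simp add: \<psi>_def)
      also have "\<dots> \<le> lev (idx (a h)) / c"
        using ch(2) c1 by (simp add: divide_right_mono)
      also have "\<dots> \<le> a h" using lev_idx[of "a h"] ab[OF h] c1 by (simp add: divide_le_eq mult.commute)
      finally show "(\<integral>z. \<psi> (h, z) \<partial>P) \<le> a h" .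
    qed
    finally show "(\<integral>x. \<psi> x \<partial>(X \<Otimes>\<^sub>M P)) \<le> (\<integral>h. a h \<partial>X)" .
    have sYQ: "sets (Y \<Otimes>\<^sub>M Q) = sets (X \<Otimes>\<^sub>M P)" using XY PQ by (intro sets_pair_measure_cong)
    have \<psi>int': "integrable (Y \<Otimes>\<^sub>M Q) \<psi>"
      by (rule test_integrable) (simp_all add: prob_space_pair Y Q is_test_cong_sets[OF sYQ] test)
    have "(\<integral>x. \<psi> x \<partial>(Y \<Otimes>\<^sub>M Q)) = (\<integral>h. (\<integral>z. \<psi> (h, z) \<partial>Q) \<partial>Y)"
      using YQ.integral_fst'[OF \<psi>int'] by simp
    also have "\<dots> \<ge> (\<integral>h. 1 - b h - \<epsilon> \<partial>Y)"
    proof (rule integral_mono)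
      show "integrable Y (\<lambda>h. \<integral>z. \<psi> (h, z) \<partial>Q)" using YQ.integrable_fst'[OF \<psi>int'] .
      have bmY[measurable]: "b \<in> borel_measurable Y" using bm by (subst measurable_cong_sets[OF XY refl])
      show "integrable Y (\<lambda>h. 1 - b h - \<epsilon>)"
      proof (rule Y.integrable_const_bound[where B="1 + \<epsilon>"])
        show "AE x in Y. norm (1 - b x - \<epsilon>) \<le> 1 + \<epsilon>" using bb sets_eq_imp_space_eq[OF XY] e
          by (auto simp: abs_le_iff intro!: AE_I2; smt (verit))
      qed measurable
      fix h assume h': "h \<in> space Y"
      then have h: "h \<in> space X" using sets_eq_imp_space_eq[OF XY] by simp
      let ?t = "a h"
      have "1 - (\<integral>z. ch (idx ?t) z \<partial>Q) < tradeoff P Q (lev (idx ?t)) + \<epsilon>/2" by (rule ch(3))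
      also have "tradeoff P Q (lev (idx ?t)) \<le> tradeoff P Q ?t"
        using lev_idx[of ?t] ab[OF h] by (intro tradeoff_mono P Q PQ) auto
      also have "\<dots> \<le> b h" by (rule tb[OF h])
      finally have A: "1 - b h - \<epsilon>/2 < (\<integral>z. ch (idx ?t) z \<partial>Q)" by simp
      have "(\<integral>z. \<psi> (h, z) \<partial>Q) = (\<integral>z. ch (idx ?t) z \<partial>Q) / c"
        by (simp add: \<psi>_def)
      moreover have "1 - b h - \<epsilon> \<le> (\<integral>z. ch (idx ?t) z \<partial>Q) / c"
      proof -
        have "(1 - b h - \<epsilon>/2) / c \<le> (\<integral>z. ch (idx ?t) z \<partial>Q) / c"
          using A c1 by (intro divide_right_mono) auto
        moreover have "1 - b h - \<epsilon> \<le> (1 - b h - \<epsilon>/2) / c"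
        proof -
          have "(1 - b h - \<epsilon>) * c \<le> 1 - b h - \<epsilon>/2"
            using bb[OF h] e unfolding c_def by (simp add: algebra_simps)
          then show ?thesis using c1 by (simp add: le_divide_eq)
        qed
        ultimately show ?thesis by linarith
      qed
      ultimately show "1 - b h - \<epsilon> \<le> (\<integral>z. \<psi> (h, z) \<partial>Q)" by simp
    qed
    finally have B: "(\<integral>h. 1 - b h - \<epsilon> \<partial>Y) \<le> (\<integral>x. \<psi> x \<partial>(Y \<Otimes>\<^sub>M Q))" .
    have bint: "integrable Y b" using bb bm sets_eq_imp_space_eq[OF XY]
      by (intro Y.integrable_const_bound[where B=1]) (auto simp: measurable_cong_sets[OF XY refl])
    have "(\<integral>h. 1 - b h - \<epsilon> \<partial>Y) = 1 - (\<integral>h. b h \<partial>Y) - \<epsilon>"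
      using bint by (simp add: Bochner_Integration.integral_diff Y.prob_space)
    then show "1 - (\<integral>x. \<psi> x \<partial>(Y \<Otimes>\<^sub>M Q)) \<le> (\<integral>h. b h \<partial>Y) + \<epsilon>" using B by simp
  qed
qed



lemma pim_transfer:
  assumes M: "\<And>i. i \<in> insert j J \<Longrightarrow> prob_space (M i)" and j: "j \<notin> J"
    and t: "is_test (M j \<Otimes>\<^sub>M PiM J M) \<psi>"
  shows "is_test (PiM (insert j J) M) (\<lambda>\<omega>. \<psi> (\<omega> j, restrict \<omega> J))"
    "(\<integral>\<omega>. \<psi> (\<omega> j, restrict \<omega> J) \<partial>PiM (insert j J) M) = (\<integral>p. \<psi> p \<partial>(M j \<Otimes>\<^sub>M PiM J M))"
proof -
  have \<psi>m[measurable]: "\<psi> \<in> borel_measurable (M j \<Otimes>\<^sub>M PiM J M)" using t unfolding is_test_def by auto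
  have m: "(\<lambda>\<omega>. (\<omega> j, restrict \<omega> J)) \<in> measurable (PiM (insert j J) M) (M j \<Otimes>\<^sub>M PiM J M)"
    by (intro measurable_Pair measurable_component_singleton measurable_restrict_subset) auto
  have sp: "(\<omega> j, restrict \<omega> J) \<in> space (M j \<Otimes>\<^sub>M PiM J M)" if "\<omega> \<in> space (PiM (insert j J) M)" for \<omega>
    using measurable_space[OF m that] .
  show "is_test (PiM (insert j J) M) (\<lambda>\<omega>. \<psi> (\<omega> j, restrict \<omega> J))"
    using t sp measurable_comp[OF m \<psi>m] unfolding is_test_def comp_def by auto
  have eq: "distr (M j \<Otimes>\<^sub>M PiM J M) (PiM (insert j J) M) (\<lambda>(x, X). X(j := x)) = PiM (insert j J) M"
    using distr_pair_PiM_eq_PiM[of J M j] M by auto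
  have m2: "(\<lambda>(x, X). X(j := x)) \<in> measurable (M j \<Otimes>\<^sub>M PiM J M) (PiM (insert j J) M)"
    using measurable_pair_swap_iff[THEN iffD1, OF measurable_add_dim[of j J M]] by simp
  have "(\<integral>\<omega>. \<psi> (\<omega> j, restrict \<omega> J) \<partial>PiM (insert j J) M)
      = (\<integral>\<omega>. \<psi> (\<omega> j, restrict \<omega> J) \<partial>distr (M j \<Otimes>\<^sub>M PiM J M) (PiM (insert j J) M) (\<lambda>(x, X). X(j := x)))"
    by (simp add: eq)
  also have "\<dots> = (\<integral>p. \<psi> ((case p of (x, X) \<Rightarrow> X(j := x)) j, restrict (case p of (x, X) \<Rightarrow> X(j := x)) J) \<partial>(M j \<Otimes>\<^sub>M PiM J M))"
    by (rule integral_distr[OF m2]) (rule measurable_comp[OF m \<psi>m, unfolded comp_def])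
  also have "\<dots> = (\<integral>p. \<psi> p \<partial>(M j \<Otimes>\<^sub>M PiM J M))"
  proof (rule Bochner_Integration.integral_cong[OF refl])
    fix p assume "p \<in> space (M j \<Otimes>\<^sub>M PiM J M)"
    then obtain x X where p: "p = (x, X)" "X \<in> space (PiM J M)" by (auto simp: space_pair_measure)
    then have "restrict (X(j := x)) J = X" using j
      by (auto simp: space_PiM PiE_def extensional_def restrict_def fun_eq_iff)
    then show "\<psi> ((case p of (x, X) \<Rightarrow> X(j := x)) j, restrict (case p of (x, X) \<Rightarrow> X(j := x)) J) = \<psi> p"
      using p by simp
  qed
  finally show "(\<integral>\<omega>. \<psi> (\<omega> j, restrict \<omega> J) \<partial>PiM (insert j J) M) = (\<integral>p. \<psi> p \<partial>(M j \<Otimes>\<^sub>M PiM J M))" .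
qed

definition kern :: "(nat \<Rightarrow> (nat \<Rightarrow> 'o) \<Rightarrow> 'r multiset \<Rightarrow> 'o measure) \<Rightarrow> (nat \<Rightarrow> 'o measure) \<Rightarrow>
   nat \<Rightarrow> 'r multiset \<Rightarrow> (nat \<Rightarrow> 'o) \<Rightarrow> (nat \<Rightarrow> 'o) measure" where
  "kern K S n E h = distr (K n h E) (PiM {..<Suc n} S) (\<lambda>y. h(n := y))"

lemma kern_meas:
  assumes "(\<lambda>h. K n h E) \<in> measurable (PiM {..<n} S) (prob_algebra (S n))"
  shows "kern K S n E \<in> measurable (PiM {..<n} S) (prob_algebra (PiM {..<Suc n} S))"
  unfolding kern_def
proof (rule measurable_distr_prob_space2[OF assms])
  show "(\<lambda>(x, y). x(n := y)) \<in> PiM {..<n} S \<Otimes>\<^sub>M S n \<rightarrow>\<^sub>M PiM {..<Suc n} S"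
    using measurable_add_dim[of n "{..<n}" S] by (simp add: lessThan_Suc)
qed

lemma compose_Suc: "compose K S Ds (Suc n) D = bind (compose K S Ds n D) (kern K S n (restrict_ds D (Ds n)))"
  by (simp add: kern_def[abs_def])

lemma compose_space:
  assumes kernel: "\<And>i E. i < k \<Longrightarrow> (\<lambda>h. K i h E) \<in> measurable (PiM {..<i} S) (prob_algebra (S i))"
  shows "n \<le> k \<Longrightarrow> compose K S Ds n D \<in> space (prob_algebra (PiM {..<n} S))"
proof (induction n)
  case 0
  have "(\<lambda>_. undefined) \<in> space (PiM {} S)" by (simp add: PiM_empty)
  then show ?case by (auto simp: space_prob_algebra prob_space_return)
next
  case (Suc n)
  then have A: "compose K S Ds n D \<in> space (prob_algebra (PiM {..<n} S))" by simp
  have B: "kern K S n (restrict_ds D (Ds n)) \<in> measurable (PiM {..<n} S) (prob_algebra (PiM {..<Suc n} S))"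
    using Suc by (intro kern_meas kernel) auto
  show ?case unfolding compose_Suc using prob_space_bind'[OF A B] sets_bind'[OF A B]
    by (simp add: space_prob_algebra)
qed



lemma compose_integral:
  assumes kernel: "\<And>i E. i < k \<Longrightarrow> (\<lambda>h. K i h E) \<in> measurable (PiM {..<i} S) (prob_algebra (S i))"
    and n: "n < k" and t: "is_test (PiM {..<Suc n} S) \<phi>"
  shows "(\<integral>x. \<phi> x \<partial>compose K S Ds (Suc n) D) =
      (\<integral>h. (\<integral>x. \<phi> x \<partial>kern K S n (restrict_ds D (Ds n)) h) \<partial>compose K S Ds n D)"
proof -
  let ?C = "compose K S Ds n D"
  let ?N = "kern K S n (restrict_ds D (Ds n))"
  have C: "?C \<in> space (prob_algebra (PiM {..<n} S))" by (rule compose_space[where k=k and K=K and S=S]) (use kernel n in auto)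
  then have Cs: "sets ?C = sets (PiM {..<n} S)" and Cp: "prob_space ?C" by (auto simp: space_prob_algebra)
  have N: "?N \<in> measurable (PiM {..<n} S) (prob_algebra (PiM {..<Suc n} S))"
    using n by (intro kern_meas kernel)
  have N': "?N \<in> measurable ?C (subprob_algebra (PiM {..<Suc n} S))"
    using measurable_prob_algebraD[OF N] by (subst measurable_cong_sets[OF Cs refl])
  have Np: "prob_space (?N h)" if "h \<in> space ?C" for h
    using measurable_space[OF N, of h] that sets_eq_imp_space_eq[OF Cs] by (auto simp: space_prob_algebra)
  show ?thesis unfolding compose_Suc
  proof (rule integral_bind[where B=1 and B'=1])
    show "\<phi> \<in> borel_measurable (PiM {..<Suc n} S)" using t by (simp add: is_test_def)
    show "\<And>x. x \<in> space (PiM {..<Suc n} S) \<Longrightarrow> \<bar>\<phi> x\<bar> \<le> 1" using t by (auto simp: is_test_def)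
    show "?N \<in> measurable ?C (subprob_algebra (PiM {..<Suc n} S))" by fact
    show "finite_measure ?C" using Cp by (simp add: prob_space.finite_measure)
    show "AE x in ?C. emeasure (?N x) (space (?N x)) \<le> ennreal 1"
      by (rule AE_I2) (simp add: Np prob_space.emeasure_space_1)
  qed
qed

lemma kern_integral:
  assumes kernel: "(\<lambda>h. K n h E) \<in> measurable (PiM {..<n} S) (prob_algebra (S n))"
    and t: "is_test (PiM {..<Suc n} S) \<phi>" and h: "h \<in> space (PiM {..<n} S)"
  shows "(\<integral>x. \<phi> x \<partial>kern K S n E h) = (\<integral>y. \<phi> (h(n := y)) \<partial>K n h E)"
    "is_test (K n h E) (\<lambda>y. \<phi> (h(n := y)))" "prob_space (K n h E)" "sets (K n h E) = sets (S n)"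
proof -
  have KP: "K n h E \<in> space (prob_algebra (S n))" using measurable_space[OF kernel h] .
  then show Ks: "sets (K n h E) = sets (S n)" and "prob_space (K n h E)" by (auto simp: space_prob_algebra)
  have upd: "(\<lambda>y. h(n := y)) \<in> measurable (S n) (PiM {..<Suc n} S)"
    using measurable_component_update[OF h, of n] by (simp add: lessThan_Suc)
  have upd': "(\<lambda>y. h(n := y)) \<in> measurable (K n h E) (PiM {..<Suc n} S)"
    using upd by (subst measurable_cong_sets[OF Ks refl])
  have pm: "\<phi> \<in> borel_measurable (PiM {..<Suc n} S)" using t by (simp add: is_test_def)
  show "(\<integral>x. \<phi> x \<partial>kern K S n E h) = (\<integral>y. \<phi> (h(n := y)) \<partial>K n h E)"
    unfolding kern_def by (rule integral_distr[OF upd' pm])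
  show "is_test (K n h E) (\<lambda>y. \<phi> (h(n := y)))"
    unfolding is_test_def
    using measurable_comp[OF upd' pm] t measurable_space[OF upd'] by (auto simp: is_test_def comp_def)
qed

lemma kern_int_meas:
  assumes kernel: "(\<lambda>h. K n h E) \<in> measurable (PiM {..<n} S) (prob_algebra (S n))"
    and t: "is_test (PiM {..<Suc n} S) \<phi>"
  shows "(\<lambda>h. \<integral>x. \<phi> x \<partial>kern K S n E h) \<in> borel_measurable (PiM {..<n} S)"
proof -
  have N: "kern K S n E \<in> measurable (PiM {..<n} S) (subprob_algebra (PiM {..<Suc n} S))"
    by (intro measurable_prob_algebraD kern_meas kernel)
  have pm: "\<phi> \<in> borel_measurable (PiM {..<Suc n} S)" using t by (simp add: is_test_def)
  show ?thesis
    using measurable_comp[OF N integral_measurable_subprob_algebra[OF pm]] by (simp add: comp_def)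
qed



lemma comp_bound:
  fixes I :: "nat set"
  assumes kernel: "\<And>i E. i < k \<Longrightarrow> (\<lambda>h. K i h E) \<in> measurable (PiM {..<i} S) (prob_algebra (S i))"
    and rep: "\<And>i. i < k \<Longrightarrow> prob_space (P i) \<and> prob_space (Q i) \<and> sets (P i) = sets (Q i)"
    and same: "\<And>i. i < k \<Longrightarrow> i \<notin> I \<Longrightarrow> restrict_ds D (Ds i) = restrict_ds D' (Ds i)"
    and dpI: "\<And>i h \<alpha>. i < k \<Longrightarrow> i \<in> I \<Longrightarrow> h \<in> space (PiM {..<i} S) \<Longrightarrow> 0 \<le> \<alpha> \<Longrightarrow> \<alpha> \<le> 1 \<Longrightarrow>
       tradeoff (P i) (Q i) \<alpha> \<le> tradeoff (K i h (restrict_ds D (Ds i))) (K i h (restrict_ds D' (Ds i))) \<alpha>"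
  shows "n \<le> k \<Longrightarrow> 0 \<le> \<alpha> \<Longrightarrow> \<alpha> \<le> 1 \<Longrightarrow>
    tradeoff (PiM (I \<inter> {..<n}) P) (PiM (I \<inter> {..<n}) Q) \<alpha> \<le> tradeoff (compose K S Ds n D) (compose K S Ds n D') \<alpha>"
proof (induction n arbitrary: \<alpha>)
  case 0
  have PP: "prob_space (PiM {} P)" "prob_space (PiM {} Q)" by (auto intro: prob_space_PiM)
  have "is_test (PiM {} P) (\<lambda>_. \<alpha>)" using 0 by (simp add: is_test_def)
  then have "tradeoff (PiM {} P) (PiM {} Q) \<alpha> \<le> 1 - (\<integral>x. \<alpha> \<partial>PiM {} Q)"
    using PP by (intro tradeoff_le) (auto simp: prob_space.prob_space PiM_empty)
  also have "\<dots> = 1 - \<alpha>" using PP by (simp add: prob_space.prob_space)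
  also have "\<dots> \<le> tradeoff (compose K S Ds 0 D) (compose K S Ds 0 D') \<alpha>"
    using 0 by (intro tradeoff_ge_I) (auto simp: prob_space_return)
  finally show ?case by simp
next
  case (Suc n)
  have n: "n < k" using Suc by simp
  define E where "E = restrict_ds D (Ds n)"
  define E' where "E' = restrict_ds D' (Ds n)"
  define C where "C = compose K S Ds n D"
  define C' where "C' = compose K S Ds n D'"
  define C1 where "C1 = compose K S Ds (Suc n) D"
  define C1' where "C1' = compose K S Ds (Suc n) D'"
  define J where "J = I \<inter> {..<n}"
  have IH: "\<And>\<alpha>. 0 \<le> \<alpha> \<Longrightarrow> \<alpha> \<le> 1 \<Longrightarrow> tradeoff (PiM J P) (PiM J Q) \<alpha> \<le> tradeoff C C' \<alpha>"
    using Suc.IH n unfolding J_def C_def C'_def by auto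
  have cs: "compose K S Ds m D0 \<in> space (prob_algebra (PiM {..<m} S))" if "m \<le> k" for m D0
    by (rule compose_space[where k=k and K=K and S=S]) (use kernel that in auto)
  have C: "prob_space C" "sets C = sets (PiM {..<n} S)" using cs[of n D] n by (auto simp: C_def space_prob_algebra)
  have C': "prob_space C'" "sets C' = sets (PiM {..<n} S)" using cs[of n D'] n by (auto simp: C'_def space_prob_algebra)
  have C1: "prob_space C1" "sets C1 = sets (PiM {..<Suc n} S)" using cs[of "Suc n" D] n by (auto simp: C1_def space_prob_algebra)
  have C1': "prob_space C1'" "sets C1' = sets (PiM {..<Suc n} S)" using cs[of "Suc n" D'] n by (auto simp: C1'_def space_prob_algebra)
  have spC: "space C = space (PiM {..<n} S)" "space C' = space (PiM {..<n} S)"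
    using C C' sets_eq_imp_space_eq by blast+
  interpret C: prob_space C by fact
  interpret C': prob_space C' by fact
  have Pn: "prob_space (P n)" "prob_space (Q n)" "sets (Q n) = sets (P n)" using rep[OF n] by auto
  interpret Pn: prob_space "P n" by (fact Pn)
  interpret Qn: prob_space "Q n" by (fact Pn)
  show ?case unfolding C1_def[symmetric] C1'_def[symmetric]
  proof (rule tradeoff_ge_I[OF C1(1) Suc.prems(2)])
    fix \<phi> assume t1: "is_test C1 \<phi>" and lev: "(\<integral>x. \<phi> x \<partial>C1) \<le> \<alpha>"
    have t: "is_test (PiM {..<Suc n} S) \<phi>" using t1 is_test_cong_sets[OF C1(2)] by simp
    define a where "a h = (\<integral>x. \<phi> x \<partial>kern K S n E h)" for h
    define b where "b h = 1 - (\<integral>x. \<phi> x \<partial>kern K S n E' h)" for h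
    have kE: "(\<lambda>h. K n h E) \<in> measurable (PiM {..<n} S) (prob_algebra (S n))" using kernel[OF n] .
    have kE': "(\<lambda>h. K n h E') \<in> measurable (PiM {..<n} S) (prob_algebra (S n))" using kernel[OF n] .
    have am: "a \<in> borel_measurable (PiM {..<n} S)" unfolding a_def by (rule kern_int_meas[where K=K and n=n and S=S and E="E", OF kE t])
    have bm: "b \<in> borel_measurable (PiM {..<n} S)" unfolding b_def using kern_int_meas[where K=K and n=n and S=S and E="E'", OF kE' t] by measurable
    have ab: "0 \<le> a h \<and> a h \<le> 1" if h: "h \<in> space (PiM {..<n} S)" for h
      using test_integral_bounds[OF kern_integral(3,2)[where K=K and n=n and S=S and E="E", OF kE t h]] kern_integral(1)[where K=K and n=n and S=S and E="E", OF kE t h]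
      by (simp add: a_def)
    have bb: "0 \<le> b h \<and> b h \<le> 1" if h: "h \<in> space (PiM {..<n} S)" for h
      using test_integral_bounds[OF kern_integral(3,2)[where K=K and n=n and S=S and E="E'", OF kE' t h]] kern_integral(1)[where K=K and n=n and S=S and E="E'", OF kE' t h]
      by (simp add: b_def)
    have tab: "tradeoff (K n h E) (K n h E') (a h) \<le> b h" if h: "h \<in> space (PiM {..<n} S)" for h
    proof -
      have "tradeoff (K n h E) (K n h E') (a h) \<le> 1 - (\<integral>y. \<phi> (h(n := y)) \<partial>K n h E')"
        using kern_integral[where K=K and n=n and S=S and E="E", OF kE t h] kern_integral[where K=K and n=n and S=S and E="E'", OF kE' t h]
        by (intro tradeoff_le) (auto simp: a_def)
      then show ?thesis using kern_integral(1)[where K=K and n=n and S=S and E="E'", OF kE' t h] by (simp add: b_def)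
    qed
    have int1: "(\<integral>x. \<phi> x \<partial>C1) = (\<integral>h. a h \<partial>C)"
      unfolding C1_def C_def a_def E_def by (rule compose_integral[OF kernel n t])
    have int1': "(\<integral>x. \<phi> x \<partial>C1') = (\<integral>h. (\<integral>x. \<phi> x \<partial>kern K S n E' h) \<partial>C')"
      unfolding C1'_def C'_def E'_def by (rule compose_integral[OF kernel n t])
    have amC: "a \<in> borel_measurable C" using am by (subst measurable_cong_sets[OF C(2) refl])
    have bmC': "b \<in> borel_measurable C'" using bm by (subst measurable_cong_sets[OF C'(2) refl])
    have intb: "(\<integral>h. b h \<partial>C') = 1 - (\<integral>x. \<phi> x \<partial>C1')"
    proof -
      have km': "(\<lambda>h. \<integral>x. \<phi> x \<partial>kern K S n E' h) \<in> borel_measurable C'"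
        using kern_int_meas[where K=K and n=n and S=S and E="E'", OF kE' t]
        by (subst measurable_cong_sets[OF C'(2) refl])
      have bi: "integrable C' (\<lambda>h. \<integral>x. \<phi> x \<partial>kern K S n E' h)"
      proof (rule C'.integrable_const_bound[where B=1])
        show "AE x in C'. norm (\<integral>y. \<phi> y \<partial>kern K S n E' x) \<le> 1"
        proof (rule AE_I2)
          fix x assume "x \<in> space C'"
          then show "norm (\<integral>y. \<phi> y \<partial>kern K S n E' x) \<le> 1" using bb[of x] spC by (auto simp: b_def)
        qed
      qed (rule km')
      show ?thesis unfolding int1' b_def using bi
        by (simp add: Bochner_Integration.integral_diff C'.prob_space)
    qed
    show "tradeoff (PiM (I \<inter> {..<Suc n}) P) (PiM (I \<inter> {..<Suc n}) Q) \<alpha> \<le> 1 - (\<integral>x. \<phi> x \<partial>C1')"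
    proof (cases "n \<in> I")
      case False
      then have EE: "E = E'" using same[OF n] by (simp add: E_def E'_def)
      have IJ: "I \<inter> {..<Suc n} = J" using False by (auto simp: J_def less_Suc_eq)
      have "is_test C a" using amC ab spC by (simp add: is_test_def)
      then have "tradeoff C C' \<alpha> \<le> 1 - (\<integral>h. a h \<partial>C')"
        using C C' lev int1 by (intro tradeoff_le) auto
      also have "(\<integral>h. a h \<partial>C') = (\<integral>x. \<phi> x \<partial>C1')" using int1' EE by (simp add: a_def)
      finally show ?thesis using IH[OF Suc.prems(2,3)] IJ by simp
    next
      case True
      have IJ: "I \<inter> {..<Suc n} = insert n J" using True by (auto simp: J_def less_Suc_eq)
      have nJ: "n \<notin> J" by (simp add: J_def)
      have PJ: "prob_space (PiM J P)" "prob_space (PiM J Q)" "sets (PiM J Q) = sets (PiM J P)"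
      proof -
        have rp: "\<And>i. i \<in> J \<Longrightarrow> prob_space (P i) \<and> prob_space (Q i) \<and> sets (P i) = sets (Q i)"
          using rep n by (auto simp: J_def)
        show "prob_space (PiM J P)" using rp by (intro prob_space_PiM) auto
        show "prob_space (PiM J Q)" using rp by (intro prob_space_PiM) auto
        show "sets (PiM J Q) = sets (PiM J P)" using rp by (intro sets_PiM_cong) auto
      qed
      interpret PJ: prob_space "PiM J P" by (fact PJ)
      interpret QJ: prob_space "PiM J Q" by (fact PJ)
      interpret CP: pair_sigma_finite C "P n" by unfold_locales
      interpret CQ: pair_sigma_finite C' "Q n" by unfold_locales
      have main: "tradeoff (PiM (insert n J) P) (PiM (insert n J) Q) \<alpha> \<le> 1 - (\<integral>x. \<phi> x \<partial>C1') + 2 * \<epsilon>"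
        if e: "\<epsilon> > 0" for \<epsilon>
      proof -
        have tb1: "tradeoff (P n) (Q n) (a h) \<le> b h" if h: "h \<in> space C" for h
          using dpI[OF n True, of h "a h"] ab[of h] tab[of h] h spC by (auto simp: E_def E'_def)
        obtain \<psi>1 where \<psi>1: "is_test (C \<Otimes>\<^sub>M P n) \<psi>1" "(\<integral>x. \<psi>1 x \<partial>(C \<Otimes>\<^sub>M P n)) \<le> (\<integral>h. a h \<partial>C)"
          "1 - (\<integral>x. \<psi>1 x \<partial>(C' \<Otimes>\<^sub>M Q n)) \<le> (\<integral>h. b h \<partial>C') + \<epsilon>"
          using key[OF C(1) C'(1) _ Pn(1) Pn(2) Pn(3) amC _ _ _ tb1 e] C C' ab bb bm spC
          by (auto simp: measurable_cong_sets[OF C(2) refl])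
        have \<psi>1m[measurable]: "\<psi>1 \<in> borel_measurable (C \<Otimes>\<^sub>M P n)" using \<psi>1(1) by (simp add: is_test_def)
        have sCQ: "sets (C' \<Otimes>\<^sub>M Q n) = sets (C \<Otimes>\<^sub>M P n)" using C C' Pn by (intro sets_pair_measure_cong) auto
        have t1': "is_test (C' \<Otimes>\<^sub>M Q n) \<psi>1" using \<psi>1(1) is_test_cong_sets[OF sCQ] by simp
        have \<psi>1m'[measurable]: "\<psi>1 \<in> borel_measurable (C' \<Otimes>\<^sub>M Q n)" using t1' by (simp add: is_test_def)
        define a2 where "a2 z = (\<integral>h. \<psi>1 (h, z) \<partial>C)" for z
        define b2 where "b2 z = 1 - (\<integral>h. \<psi>1 (h, z) \<partial>C')" for z
        have a2m: "a2 \<in> borel_measurable (P n)" unfolding a2_def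
          by (rule C.borel_measurable_lebesgue_integral)
             (use measurable_pair_swap_iff[THEN iffD1, OF \<psi>1m] in simp)
        have b2m0: "(\<lambda>z. \<integral>h. \<psi>1 (h, z) \<partial>C') \<in> borel_measurable (Q n)"
          by (rule C'.borel_measurable_lebesgue_integral)
             (use measurable_pair_swap_iff[THEN iffD1, OF \<psi>1m'] in simp)
        then have b2m0': "(\<lambda>z. \<integral>h. \<psi>1 (h, z) \<partial>C') \<in> borel_measurable (P n)"
          by (subst measurable_cong_sets[OF Pn(3)[symmetric] refl])
        have b2m: "b2 \<in> borel_measurable (P n)" unfolding b2_def
          using b2m0' by measurable
        have tz: "is_test C (\<lambda>h. \<psi>1 (h, z))" "is_test C' (\<lambda>h. \<psi>1 (h, z))" if z: "z \<in> space (P n)" for z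
        proof -
          have z': "z \<in> space (Q n)" using z sets_eq_imp_space_eq[OF Pn(3)] by simp
          show "is_test C (\<lambda>h. \<psi>1 (h, z))"
            using measurable_comp[OF measurable_Pair2'[OF z] \<psi>1m] \<psi>1(1) z
            by (auto simp: is_test_def comp_def space_pair_measure)
          show "is_test C' (\<lambda>h. \<psi>1 (h, z))"
            using measurable_comp[OF measurable_Pair2'[OF z'] \<psi>1m'] t1' z'
            by (auto simp: is_test_def comp_def space_pair_measure)
        qed
        have a2b: "0 \<le> a2 z \<and> a2 z \<le> 1" if "z \<in> space (P n)" for z
          using test_integral_bounds[OF C(1) tz(1)[OF that]] by (simp add: a2_def)
        have b2b: "0 \<le> b2 z \<and> b2 z \<le> 1" if "z \<in> space (P n)" for z
          using test_integral_bounds[OF C'(1) tz(2)[OF that]] by (simp add: b2_def)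
        have tb2: "tradeoff (PiM J P) (PiM J Q) (a2 z) \<le> b2 z" if z: "z \<in> space (P n)" for z
        proof -
          have "tradeoff (PiM J P) (PiM J Q) (a2 z) \<le> tradeoff C C' (a2 z)"
            using IH a2b[OF z] by auto
          also have "\<dots> \<le> b2 z" unfolding b2_def
            using C C' tz[OF z] by (intro tradeoff_le) (auto simp: a2_def)
          finally show ?thesis .
        qed
        obtain \<psi>2 where \<psi>2: "is_test (P n \<Otimes>\<^sub>M PiM J P) \<psi>2" "(\<integral>x. \<psi>2 x \<partial>(P n \<Otimes>\<^sub>M PiM J P)) \<le> (\<integral>z. a2 z \<partial>P n)"
          "1 - (\<integral>x. \<psi>2 x \<partial>(Q n \<Otimes>\<^sub>M PiM J Q)) \<le> (\<integral>z. b2 z \<partial>Q n) + \<epsilon>"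
          using key[OF Pn(1) Pn(2) Pn(3) PJ(1) PJ(2) PJ(3) a2m _ b2m _ tb2 e] a2b b2b by auto
        have \<psi>1i: "integrable (C \<Otimes>\<^sub>M P n) \<psi>1"
          using test_integrable[OF _ \<psi>1(1)] C(1) Pn(1) by (simp add: prob_space_pair)
        have \<psi>1i': "integrable (C' \<Otimes>\<^sub>M Q n) \<psi>1"
          using test_integrable[OF _ t1'] C'(1) Pn(2) by (simp add: prob_space_pair)
        have ia2: "(\<integral>z. a2 z \<partial>P n) = (\<integral>x. \<psi>1 x \<partial>(C \<Otimes>\<^sub>M P n))"
          unfolding a2_def using CP.integral_snd[of "\<lambda>x y. \<psi>1 (x, y)"] \<psi>1i by simp
        have ib2: "(\<integral>z. b2 z \<partial>Q n) = 1 - (\<integral>x. \<psi>1 x \<partial>(C' \<Otimes>\<^sub>M Q n))"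
        proof -
          have "integrable (Q n) (\<lambda>z. \<integral>h. \<psi>1 (h, z) \<partial>C')"
            using CQ.integrable_snd[of "\<lambda>x y. \<psi>1 (x, y)"] \<psi>1i' by simp
          then show ?thesis unfolding b2_def
            using CQ.integral_snd[of "\<lambda>x y. \<psi>1 (x, y)"] \<psi>1i'
            by (simp add: Bochner_Integration.integral_diff Qn.prob_space)
        qed
        have sQ: "sets (Q n \<Otimes>\<^sub>M PiM J Q) = sets (P n \<Otimes>\<^sub>M PiM J P)"
          using Pn PJ by (intro sets_pair_measure_cong) auto
        have t2': "is_test (Q n \<Otimes>\<^sub>M PiM J Q) \<psi>2" using \<psi>2(1) is_test_cong_sets[OF sQ] by simp
        have pinsP: "\<And>i. i \<in> insert n J \<Longrightarrow> prob_space (P i)" and pinsQ: "\<And>i. i \<in> insert n J \<Longrightarrow> prob_space (Q i)"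
          using rep n by (auto simp: J_def)
        note TP = pim_transfer[OF pinsP nJ \<psi>2(1)]
        note TQ = pim_transfer[OF pinsQ nJ t2']
        have "tradeoff (PiM (insert n J) P) (PiM (insert n J) Q) \<alpha>
            \<le> 1 - (\<integral>\<omega>. \<psi>2 (\<omega> n, restrict \<omega> J) \<partial>PiM (insert n J) Q)"
        proof (rule tradeoff_le[OF _ _ TP(1)])
          show "prob_space (PiM (insert n J) Q)" using pinsQ by (rule prob_space_PiM)
          show "sets (PiM (insert n J) Q) = sets (PiM (insert n J) P)"
            using rep n by (intro sets_PiM_cong) (auto simp: J_def)
          show "(\<integral>\<omega>. \<psi>2 (\<omega> n, restrict \<omega> J) \<partial>PiM (insert n J) P) \<le> \<alpha>"
            using TP(2) \<psi>2(2) ia2 \<psi>1(2) int1 lev by linarith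
        qed
        also have "\<dots> \<le> 1 - (\<integral>x. \<phi> x \<partial>C1') + 2 * \<epsilon>"
          using TQ(2) \<psi>2(3) ib2 \<psi>1(3) intb by linarith
        finally show ?thesis .
      qed
      have "tradeoff (PiM (insert n J) P) (PiM (insert n J) Q) \<alpha> \<le> 1 - (\<integral>x. \<phi> x \<partial>C1')"
      proof (rule field_le_epsilon)
        fix e :: real assume "0 < e"
        then show "tradeoff (PiM (insert n J) P) (PiM (insert n J) Q) \<alpha> \<le> 1 - (\<integral>x. \<phi> x \<partial>C1') + e"
          using main[of "e/2"] by simp
      qed
      then show ?thesis using IJ by simp
    qed
  qed
qed



lemma restrict_add: "restrict_ds (D + {#x#}) A = (if x \<in> A then restrict_ds D A + {#x#} else restrict_ds D A)"
  by (simp add: restrict_ds_def)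

lemma tradeoff_nonneg:
  assumes "prob_space P" "prob_space Q" "sets Q = sets P" "0 \<le> \<alpha>"
  shows "0 \<le> tradeoff P Q \<alpha>"
proof (rule tradeoff_ge_I[OF assms(1,4)])
  fix \<phi> assume "is_test P \<phi>"
  then have "is_test Q \<phi>" using is_test_cong_sets[OF assms(3)] by simp
  then show "0 \<le> 1 - (\<integral>x. \<phi> x \<partial>Q)" using test_integral_bounds(2)[OF assms(2)] by simp
qed

theorem theorem6:
  fixes k :: nat
    and Ds :: "nat \<Rightarrow> ('r::finite) set"
    and S :: "nat \<Rightarrow> 'o measure"
    and K :: "nat \<Rightarrow> (nat \<Rightarrow> 'o) \<Rightarrow> 'r multiset \<Rightarrow> 'o measure"
    and P Q :: "nat \<Rightarrow> 'p measure"
  assumes kernel: "\<And>i E. i < k \<Longrightarrow>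
      (\<lambda>h. K i h E) \<in> measurable (PiM {..<i} S) (prob_algebra (S i))"
    and rep: "\<And>i. i < k \<Longrightarrow> prob_space (P i) \<and> prob_space (Q i) \<and> sets (P i) = sets (Q i)"
    and dp: "\<And>i h. i < k \<Longrightarrow> h \<in> space (PiM {..<i} S) \<Longrightarrow>
      f_DP (\<lambda>E. K i h E) (tradeoff (P i) (Q i))"
  shows "f_DP (compose K S Ds k)
      (lce {tensor_tradeoff I P Q | I. I \<subseteq> {..<k} \<and> (\<Inter>i\<in>I. Ds i) \<noteq> {}})"
  unfolding f_DP_def tradeoff_ge_def
proof (intro allI impI ballI)
  fix D D' :: "'r multiset" and \<alpha> :: real
  assume nb: "neighboring D D'" and \<alpha>: "\<alpha> \<in> {0..1}"
  obtain x where x: "D' = D + {#x#} \<or> D = D' + {#x#}" using nb unfolding neighboring_def by blast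
  define I where "I = {i. i < k \<and> x \<in> Ds i}"
  have same: "restrict_ds D (Ds i) = restrict_ds D' (Ds i)" if "i < k" "i \<notin> I" for i
    using x that by (auto simp: I_def restrict_ds_def)
  have nbi: "neighboring (restrict_ds D (Ds i)) (restrict_ds D' (Ds i))" if "i \<in> I" for i
    using x that by (auto simp: I_def restrict_ds_def neighboring_def)
  have dpI: "tradeoff (P i) (Q i) a \<le> tradeoff (K i h (restrict_ds D (Ds i))) (K i h (restrict_ds D' (Ds i))) a"
    if "i < k" "i \<in> I" "h \<in> space (PiM {..<i} S)" "0 \<le> a" "a \<le> 1" for i h a
    using dp[OF that(1,3)] nbi[OF that(2)] that(4,5) unfolding f_DP_def tradeoff_ge_def by auto
  have cb: "tradeoff (PiM (I \<inter> {..<k}) P) (PiM (I \<inter> {..<k}) Q) \<alpha> \<le> tradeoff (compose K S Ds k D) (compose K S Ds k D') \<alpha>"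
    by (rule comp_bound[where k=k and K=K and S=S and P=P and Q=Q and Ds=Ds and D=D and D'=D' and I=I])
       (use kernel rep same dpI \<alpha> in auto)
  have II: "I \<inter> {..<k} = I" by (auto simp: I_def)
  let ?F = "{tensor_tradeoff I P Q | I. I \<subseteq> {..<k} \<and> (\<Inter>i\<in>I. Ds i) \<noteq> {}}"
  have inF: "tensor_tradeoff I P Q \<in> ?F" by (auto simp: I_def)
  have Fnn: "0 \<le> h y" if hF: "h \<in> ?F" and hy: "y \<in> {0..1}" for h y
  proof -
    obtain J where J: "h = tensor_tradeoff J P Q" "J \<subseteq> {..<k}" using hF by auto
    have rp: "\<And>i. i \<in> J \<Longrightarrow> prob_space (P i) \<and> prob_space (Q i) \<and> sets (P i) = sets (Q i)"
      using rep J(2) by auto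
    show ?thesis unfolding J(1) tensor_tradeoff_def
      using hy rp by (intro tradeoff_nonneg prob_space_PiM sets_PiM_cong) auto
  qed
  have "lce ?F \<alpha> \<le> tensor_tradeoff I P Q \<alpha>"
    unfolding lce_def
  proof (rule cSup_least)
    have "(\<lambda>_. 0::real) \<in> {g. convex_on {0..1} g \<and> (\<forall>h\<in>?F. \<forall>y\<in>{0..1}. g y \<le> h y)}"
      using Fnn by (auto simp: convex_on_const convex_real_interval)
    then show "{g \<alpha> | g. convex_on {0..1} g \<and> (\<forall>h\<in>?F. \<forall>y\<in>{0..1}. g y \<le> h y)} \<noteq> {}" by blast
  next
    fix v assume "v \<in> {g \<alpha> | g. convex_on {0..1} g \<and> (\<forall>h\<in>?F. \<forall>y\<in>{0..1}. g y \<le> h y)}"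
    then obtain g where g: "v = g \<alpha>" "\<forall>h\<in>?F. \<forall>y\<in>{0..1}. g y \<le> h y" by blast
    have "g \<alpha> \<le> tensor_tradeoff I P Q \<alpha>" using bspec[OF g(2) inF] \<alpha> by blast
    then show "v \<le> tensor_tradeoff I P Q \<alpha>" using g(1) by simp
  qed
  also have "\<dots> \<le> tradeoff (compose K S Ds k D) (compose K S Ds k D') \<alpha>"
    using cb II by (simp add: tensor_tradeoff_def)
  finally show "lce ?F \<alpha> \<le> tradeoff (compose K S Ds k D) (compose K S Ds k D') \<alpha>" .
qed


end
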